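(* For every integer $n\ge 3$, $$\sum_{\substack{b\ge 0,\ k\ge 0\\ 2b+k+1=n}}\#\mathrm{SYT}^{+k}\big((b+1,b)\big)=\mathrm{Cat}(n)-\mathrm{Cat}(n-1)=\frac{3}{n+1}\binom{2n-2}{n},$$ where for $b=0$ the shape $(1,0)$ is the single-cell shape $(1)$ and $\mathrm{Cat}(m)=\frac1{m+1}\binom{2m}{m}$.
   Context: $\mathrm{SYT}^{+k}(\lambda)$: for a partition $\lambda$ of $N$ and $k\ge 0$, the set of fillings $S$ of the cells of the Ferrers diagram of $\lambda$ by nonempty sets of positive integers forming a set partition of $[N+k]$, such that $\max S(u)<\min S(v)$ whenever $u\ne v$ and $u$ is weakly northwest of $v$. *)

theory Defs
  imports Complex_Main
begin

text \<open>A partition is given as a list of parts (weakly decreasing, trailing zeros allowed).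
  Its Ferrers diagram (English convention, 0-indexed): cell (i,j) = row i, column j.\<close>
definition ferrers :: "nat list \<Rightarrow> (nat \<times> nat) set" where
  "ferrers lam = {(i, j). i < length lam \<and> j < lam ! i}"

definition weakly_nw :: "nat \<times> nat \<Rightarrow> nat \<times> nat \<Rightarrow> bool" where
  "weakly_nw u v \<longleftrightarrow> fst u \<le> fst v \<and> snd u \<le> snd v"

definition SYT_plus :: "nat \<Rightarrow> nat list \<Rightarrow> ((nat \<times> nat) \<Rightarrow> nat set) set" where
  "SYT_plus k lam = {S.
     (\<forall>c. c \<notin> ferrers lam \<longrightarrow> S c = {}) \<and>
     (\<forall>c \<in> ferrers lam. S c \<noteq> {}) \<and>
     (\<forall>u \<in> ferrers lam. \<forall>v \<in> ferrers lam. u \<noteq> v \<longrightarrow> S u \<inter> S v = {}) \<and>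
     (\<Union>c \<in> ferrers lam. S c) = {1 .. sum_list lam + k} \<and>
     (\<forall>u \<in> ferrers lam. \<forall>v \<in> ferrers lam. u \<noteq> v \<and> weakly_nw u v \<longrightarrow> Max (S u) < Min (S v))}"

definition catalan :: "nat \<Rightarrow> real" where
  "catalan m = (2*m choose m) / (m + 1)"

end

theory Submission
  imports Defs
begin


definition nwp :: "nat \<times> nat \<Rightarrow> nat \<times> nat \<Rightarrow> bool" where
  "nwp u v \<longleftrightarrow> u \<noteq> v \<and> weakly_nw u v"

definition valid :: "(nat \<times> nat) set \<Rightarrow> (nat \<times> nat) list \<Rightarrow> bool" where
  "valid F ws \<longleftrightarrow> set ws = F \<and> (\<forall>i j. i < j \<and> j < length ws \<longrightarrow> \<not> nwp (ws!j) (ws!i))"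

definition VL :: "(nat \<times> nat) set \<Rightarrow> nat \<Rightarrow> (nat \<times> nat) list set" where
  "VL F m = {ws. length ws = m \<and> valid F ws}"

definition Fill :: "(nat \<times> nat) set \<Rightarrow> nat \<Rightarrow> ((nat \<times> nat) \<Rightarrow> nat set) set" where
  "Fill F m = {S.
     (\<forall>c. c \<notin> F \<longrightarrow> S c = {}) \<and>
     (\<forall>c \<in> F. S c \<noteq> {}) \<and>
     (\<forall>u \<in> F. \<forall>v \<in> F. u \<noteq> v \<longrightarrow> S u \<inter> S v = {}) \<and>
     (\<Union>c \<in> F. S c) = {1 .. m} \<and>
     (\<forall>u \<in> F. \<forall>v \<in> F. u \<noteq> v \<and> weakly_nw u v \<longrightarrow> Max (S u) < Min (S v))}"

definition toS :: "(nat \<times> nat) list \<Rightarrow> (nat \<times> nat) \<Rightarrow> nat set" where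
  "toS ws c = {x. 1 \<le> x \<and> x \<le> length ws \<and> ws ! (x - 1) = c}"

lemma toS_inj: "inj_on toS (VL F m)"
proof (rule inj_onI)
  fix w1 w2 assume w1: "w1 \<in> VL F m" and w2: "w2 \<in> VL F m" and eq: "toS w1 = toS w2"
  show "w1 = w2"
  proof (rule nth_equalityI)
    show "length w1 = length w2" using w1 w2 by (simp add: VL_def)
    fix i assume i: "i < length w1"
    have "Suc i \<in> toS w1 (w1 ! i)" using i by (simp add: toS_def)
    hence "Suc i \<in> toS w2 (w1 ! i)" using eq by simp
    thus "w1 ! i = w2 ! i" by (simp add: toS_def)
  qed
qed

lemma toS_sub: "ws \<in> VL F m \<Longrightarrow> toS ws \<in> Fill F m"
proof -
  assume "ws \<in> VL F m"
  hence len: "length ws = m" and st: "set ws = F"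
    and ord: "\<And>i j. i < j \<Longrightarrow> j < m \<Longrightarrow> \<not> nwp (ws!j) (ws!i)"
    by (auto simp: VL_def valid_def)
  let ?S = "toS ws"
  have sub: "?S c \<subseteq> {1..m}" for c using len by (auto simp: toS_def)
  have fin: "finite (?S c)" for c using sub finite_subset by blast
  have mem: "x \<in> ?S c \<longleftrightarrow> 1 \<le> x \<and> x \<le> m \<and> ws ! (x-1) = c" for x c
    using len by (simp add: toS_def)
  have A: "\<forall>c. c \<notin> F \<longrightarrow> ?S c = {}"
  proof (intro allI impI)
    fix c assume c: "c \<notin> F"
    { fix x assume "x \<in> ?S c"
      hence x: "1 \<le> x" "x \<le> m" "ws ! (x-1) = c" using mem by auto
      hence "x - 1 < length ws" using len by simp
      hence "ws ! (x-1) \<in> F" using st nth_mem by blast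
      hence False using x c by simp }
    thus "?S c = {}" by blast
  qed
  have B: "\<forall>c \<in> F. ?S c \<noteq> {}"
  proof
    fix c assume "c \<in> F"
    then obtain i where "i < m" "ws ! i = c" using st len by (auto simp: in_set_conv_nth)
    hence "Suc i \<in> ?S c" using mem by simp
    thus "?S c \<noteq> {}" by blast
  qed
  have C: "\<forall>u \<in> F. \<forall>v \<in> F. u \<noteq> v \<longrightarrow> ?S u \<inter> ?S v = {}"
    by (auto simp: toS_def)
  have D: "(\<Union>c \<in> F. ?S c) = {1 .. m}"
  proof
    show "(\<Union>c \<in> F. ?S c) \<subseteq> {1 .. m}" using sub by blast
    show "{1..m} \<subseteq> (\<Union>c \<in> F. ?S c)"
    proof
      fix x assume x: "x \<in> {1..m}"
      hence "ws ! (x-1) \<in> F" using st len by auto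
      moreover have "x \<in> ?S (ws ! (x-1))" using x mem by simp
      ultimately show "x \<in> (\<Union>c \<in> F. ?S c)" by blast
    qed
  qed
  have E: "\<forall>u \<in> F. \<forall>v \<in> F. u \<noteq> v \<and> weakly_nw u v \<longrightarrow> Max (?S u) < Min (?S v)"
  proof (intro ballI impI)
    fix u v assume u: "u \<in> F" and v: "v \<in> F" and uv: "u \<noteq> v \<and> weakly_nw u v"
    have "Max (?S u) \<in> ?S u" using B u fin Max_in by blast
    hence p: "1 \<le> Max (?S u)" "Max (?S u) \<le> m" "ws ! (Max (?S u) - 1) = u" using mem by auto
    have "Min (?S v) \<in> ?S v" using B v fin Min_in by blast
    hence q: "1 \<le> Min (?S v)" "Min (?S v) \<le> m" "ws ! (Min (?S v) - 1) = v" using mem by auto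
    show "Max (?S u) < Min (?S v)"
    proof (rule ccontr)
      assume "\<not> ?thesis"
      hence "Min (?S v) - 1 \<le> Max (?S u) - 1" by simp
      moreover have "Min (?S v) - 1 \<noteq> Max (?S u) - 1" using p q uv by auto
      ultimately have lt: "Min (?S v) - 1 < Max (?S u) - 1" by simp
      have "Max (?S u) - 1 < m" using p by simp
      hence "\<not> nwp (ws ! (Max (?S u) - 1)) (ws ! (Min (?S v) - 1))" using ord lt by blast
      thus False using p q uv by (simp add: nwp_def)
    qed
  qed
  show ?thesis using A B C D E by (simp add: Fill_def)
qed

lemma toS_sup: assumes S: "S \<in> Fill F m" shows "S \<in> toS ` VL F m"
proof -
  have A: "\<And>c. c \<notin> F \<Longrightarrow> S c = {}" and B: "\<And>c. c \<in> F \<Longrightarrow> S c \<noteq> {}"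
    and C: "\<And>u v. u \<in> F \<Longrightarrow> v \<in> F \<Longrightarrow> u \<noteq> v \<Longrightarrow> S u \<inter> S v = {}"
    and D: "(\<Union>c \<in> F. S c) = {1 .. m}"
    and E: "\<And>u v. u \<in> F \<Longrightarrow> v \<in> F \<Longrightarrow> u \<noteq> v \<Longrightarrow> weakly_nw u v \<Longrightarrow> Max (S u) < Min (S v)"
    using S by (auto simp: Fill_def)
  have sub: "S c \<subseteq> {1..m}" for c using A D by (cases "c \<in> F") auto
  have fin: "finite (S c)" for c using sub finite_subset by blast
  define ws where "ws = map (\<lambda>i. SOME c. c \<in> F \<and> Suc i \<in> S c) [0..<m]"
  have len: "length ws = m" by (simp add: ws_def)
  have ex: "\<exists>c. c \<in> F \<and> Suc i \<in> S c" if "i < m" for i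
  proof -
    have "Suc i \<in> {1..m}" using that by simp
    thus ?thesis using D by blast
  qed
  have wsi: "ws ! i \<in> F \<and> Suc i \<in> S (ws ! i)" if "i < m" for i
    using someI_ex[OF ex[OF that]] that by (simp add: ws_def)
  have iff: "Suc i \<in> S c \<longleftrightarrow> ws ! i = c" if "i < m" for i c
  proof
    assume h: "Suc i \<in> S c"
    hence "c \<in> F" using A by blast
    thus "ws ! i = c" using C[of "ws ! i" c] wsi[OF that] h by blast
  next
    assume "ws ! i = c" thus "Suc i \<in> S c" using wsi[OF that] by blast
  qed
  have eqS: "toS ws = S"
  proof
    fix c
    show "toS ws c = S c"
    proof
      show "toS ws c \<subseteq> S c"
      proof
        fix x assume "x \<in> toS ws c"
        hence x: "1 \<le> x" "x \<le> m" "ws ! (x-1) = c" using len by (auto simp: toS_def)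
        hence "Suc (x-1) \<in> S c" using iff[of "x-1" c] by simp
        thus "x \<in> S c" using x by simp
      qed
      show "S c \<subseteq> toS ws c"
      proof
        fix x assume xs: "x \<in> S c"
        hence x: "1 \<le> x" "x \<le> m" using sub[of c] by auto
        hence "Suc (x-1) \<in> S c" using xs by simp
        hence "ws ! (x-1) = c" using iff[of "x-1" c] x by simp
        thus "x \<in> toS ws c" using x len by (simp add: toS_def)
      qed
    qed
  qed
  have st: "set ws = F"
  proof
    show "set ws \<subseteq> F"
    proof
      fix c assume "c \<in> set ws"
      then obtain i where "i < length ws" "ws ! i = c" by (auto simp: in_set_conv_nth)
      thus "c \<in> F" using wsi len by fastforce
    qed
    show "F \<subseteq> set ws"
    proof
      fix c assume c: "c \<in> F"
      then obtain x where xs: "x \<in> S c" using B by blast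
      hence x: "1 \<le> x" "x \<le> m" using sub[of c] by auto
      hence "Suc (x-1) \<in> S c" using xs by simp
      hence "ws ! (x-1) = c" using iff[of "x-1" c] x by simp
      thus "c \<in> set ws" using x len by (metis Suc_le_eq Suc_pred' less_numeral_extra(1) nth_mem order_less_le_trans)
    qed
  qed
  have ord: "\<not> nwp (ws!j) (ws!i)" if ij: "i < j" "j < m" for i j
  proof
    assume h: "nwp (ws!j) (ws!i)"
    let ?u = "ws ! j" and ?v = "ws ! i"
    have "?u \<in> F" "?v \<in> F" using wsi ij by auto
    hence lt: "Max (S ?u) < Min (S ?v)" using E h by (simp add: nwp_def)
    have "Suc j \<in> S ?u" "Suc i \<in> S ?v" using wsi ij by auto
    hence "Suc j \<le> Max (S ?u)" "Min (S ?v) \<le> Suc i" using fin by auto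
    thus False using lt ij by simp
  qed
  have "ws \<in> VL F m" using len st ord by (auto simp: VL_def valid_def)
  thus ?thesis using eqS by blast
qed

lemma card_Fill: "card (Fill F m) = card (VL F m)"
proof -
  have "Fill F m = toS ` VL F m" using toS_sub toS_sup by blast
  thus ?thesis using card_image[OF toS_inj] by simp
qed



definition ordw :: "(nat \<times> nat) list \<Rightarrow> bool" where
  "ordw ws \<longleftrightarrow> (\<forall>i j. i < j \<and> j < length ws \<longrightarrow> \<not> nwp (ws!j) (ws!i))"

lemma valid_ordw: "valid F ws \<longleftrightarrow> set ws = F \<and> ordw ws"
  by (simp add: valid_def ordw_def)

lemma ordw_snoc: "ordw (ws @ [z]) \<longleftrightarrow> ordw ws \<and> (\<forall>x\<in>set ws. \<not> nwp z x)"
proof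
  assume h: "ordw (ws @ [z])"
  have "ordw ws" unfolding ordw_def
  proof (intro allI impI)
    fix i j assume ij: "i < j \<and> j < length ws"
    thus "\<not> nwp (ws!j) (ws!i)" using h[unfolded ordw_def, rule_format, of i j]
      by (simp add: nth_append)
  qed
  moreover have "\<forall>x\<in>set ws. \<not> nwp z x"
  proof
    fix x assume "x \<in> set ws"
    then obtain i where i: "i < length ws" "ws ! i = x" by (auto simp: in_set_conv_nth)
    thus "\<not> nwp z x" using h[unfolded ordw_def, rule_format, of i "length ws"]
      by (simp add: nth_append)
  qed
  ultimately show "ordw ws \<and> (\<forall>x\<in>set ws. \<not> nwp z x)" by blast
next
  assume h: "ordw ws \<and> (\<forall>x\<in>set ws. \<not> nwp z x)"
  show "ordw (ws @ [z])" unfolding ordw_def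
  proof (intro allI impI)
    fix i j assume ij: "i < j \<and> j < length (ws @ [z])"
    show "\<not> nwp ((ws @ [z])!j) ((ws @ [z])!i)"
    proof (cases "j < length ws")
      case True
      thus ?thesis using h ij by (simp add: nth_append ordw_def)
    next
      case False
      hence "j = length ws" using ij by simp
      moreover have "ws ! i \<in> set ws" using ij \<open>j = length ws\<close> by simp
      ultimately show ?thesis using h ij by (simp add: nth_append)
    qed
  qed
qed

definition MX :: "(nat \<times> nat) set \<Rightarrow> (nat \<times> nat) set" where
  "MX F = {z \<in> F. \<forall>x \<in> F. \<not> nwp z x}"

lemma nwp_irrefl[simp]: "\<not> nwp z z" by (simp add: nwp_def)

lemma valid_snoc: "valid F (ws @ [z]) \<longleftrightarrow> z \<in> MX F \<and> (valid F ws \<or> valid (F - {z}) ws)"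
proof
  assume h: "valid F (ws @ [z])"
  hence st: "set ws \<union> {z} = F" and o: "ordw ws" and mx: "\<forall>x\<in>set ws. \<not> nwp z x"
    by (auto simp: valid_ordw ordw_snoc)
  have "z \<in> MX F" using st mx by (auto simp: MX_def)
  moreover have "valid F ws \<or> valid (F - {z}) ws"
  proof (cases "z \<in> set ws")
    case True thus ?thesis using st o by (auto simp: valid_ordw)
  next
    case False
    hence "set ws = F - {z}" using st by auto
    thus ?thesis using o by (simp add: valid_ordw)
  qed
  ultimately show "z \<in> MX F \<and> (valid F ws \<or> valid (F - {z}) ws)" by blast
next
  assume h: "z \<in> MX F \<and> (valid F ws \<or> valid (F - {z}) ws)"
  hence zF: "z \<in> F" and mx: "\<forall>x\<in>F. \<not> nwp z x" by (auto simp: MX_def)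
  from h have st: "set ws \<subseteq> F" and st2: "set ws \<union> {z} = F" and o: "ordw ws"
    using zF by (auto simp: valid_ordw)
  show "valid F (ws @ [z])" using st st2 o mx by (auto simp: valid_ordw ordw_snoc)
qed

lemma finite_VL: "finite F \<Longrightarrow> finite (VL F m)"
proof -
  assume f: "finite F"
  have "VL F m \<subseteq> {ws. set ws \<subseteq> F \<and> length ws = m}" by (auto simp: VL_def valid_def)
  thus ?thesis using finite_lists_length_eq[OF f] finite_subset by blast
qed

lemma VL_Suc: "VL F (Suc m) = (\<Union>z\<in>MX F. (\<lambda>ws. ws @ [z]) ` (VL F m \<union> VL (F - {z}) m))"
proof
  show "VL F (Suc m) \<subseteq> (\<Union>z\<in>MX F. (\<lambda>ws. ws @ [z]) ` (VL F m \<union> VL (F - {z}) m))"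
  proof
    fix w assume w: "w \<in> VL F (Suc m)"
    hence "w \<noteq> []" by (auto simp: VL_def)
    then obtain ws z where wz: "w = ws @ [z]" by (metis rev_exhaust)
    hence "valid F (ws @ [z])" "length ws = m" using w by (auto simp: VL_def)
    hence "z \<in> MX F" "ws \<in> VL F m \<union> VL (F - {z}) m" by (auto simp: valid_snoc VL_def)
    thus "w \<in> (\<Union>z\<in>MX F. (\<lambda>ws. ws @ [z]) ` (VL F m \<union> VL (F - {z}) m))" using wz by blast
  qed
  show "(\<Union>z\<in>MX F. (\<lambda>ws. ws @ [z]) ` (VL F m \<union> VL (F - {z}) m)) \<subseteq> VL F (Suc m)"
    by (auto simp: VL_def valid_snoc)
qed

lemma card_VL_Suc:
  assumes f: "finite F"
  shows "card (VL F (Suc m)) = (\<Sum>z\<in>MX F. card (VL F m) + card (VL (F - {z}) m))"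
proof -
  have fM: "finite (MX F)" using f by (auto simp: MX_def)
  have "card (VL F (Suc m)) = (\<Sum>z\<in>MX F. card ((\<lambda>ws. ws @ [z]) ` (VL F m \<union> VL (F - {z}) m)))"
    unfolding VL_Suc
  proof (rule card_UN_disjoint[OF fM])
    show "\<forall>z\<in>MX F. finite ((\<lambda>ws. ws @ [z]) ` (VL F m \<union> VL (F - {z}) m))"
      using f finite_VL by blast
    show "\<forall>z\<in>MX F. \<forall>z'\<in>MX F. z \<noteq> z' \<longrightarrow>
       (\<lambda>ws. ws @ [z]) ` (VL F m \<union> VL (F - {z}) m) \<inter> (\<lambda>ws. ws @ [z']) ` (VL F m \<union> VL (F - {z'}) m) = {}"
      by auto
  qed
  also have "\<dots> = (\<Sum>z\<in>MX F. card (VL F m) + card (VL (F - {z}) m))"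
  proof (rule sum.cong[OF refl])
    fix z assume z: "z \<in> MX F"
    have "card ((\<lambda>ws. ws @ [z]) ` (VL F m \<union> VL (F - {z}) m)) = card (VL F m \<union> VL (F - {z}) m)"
      by (rule card_image) (auto simp: inj_on_def)
    also have "\<dots> = card (VL F m) + card (VL (F - {z}) m)"
    proof (rule card_Un_disjoint)
      show "finite (VL F m)" "finite (VL (F - {z}) m)" using f finite_VL by auto
      show "VL F m \<inter> VL (F - {z}) m = {}" using z by (auto simp: VL_def valid_def MX_def)
    qed
    finally show "card ((\<lambda>ws. ws @ [z]) ` (VL F m \<union> VL (F - {z}) m)) = card (VL F m) + card (VL (F - {z}) m)" .
  qed
  finally show ?thesis .
qed



definition sh :: "nat \<Rightarrow> nat \<Rightarrow> (nat \<times> nat) set" where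
  "sh a c = {(i, j). (i = 0 \<and> j < a) \<or> (i = 1 \<and> j < c)}"

lemma sh_eq: "sh a c = (\<lambda>j. (0, j)) ` {..<a} \<union> (\<lambda>j. (1, j)) ` {..<c}"
  by (auto simp: sh_def)

lemma finite_sh: "finite (sh a c)" by (simp add: sh_eq)

lemma card_sh: "card (sh a c) = a + c"
proof -
  have "card (sh a c) = card ((\<lambda>j. (0::nat, j)) ` {..<a}) + card ((\<lambda>j. (1::nat, j)) ` {..<c})"
    unfolding sh_eq by (rule card_Un_disjoint) auto
  also have "\<dots> = a + c" by (simp add: card_image inj_on_def)
  finally show ?thesis .
qed

lemma MX_sh: assumes ca: "c \<le> a" shows "MX (sh a c) =
   (if c < a then {(0, a - 1)} else {}) \<union> (if 0 < c then {(1, c - 1)} else {})"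
proof (rule set_eqI)
  fix z :: "nat \<times> nat"
  obtain i j where z: "z = (i, j)" by (cases z)
  show "z \<in> MX (sh a c) \<longleftrightarrow> z \<in> (if c < a then {(0, a - 1)} else {}) \<union> (if 0 < c then {(1, c - 1)} else {})"
  proof
    assume h: "z \<in> MX (sh a c)"
    hence zin: "z \<in> sh a c" and mx: "\<And>x. x \<in> sh a c \<Longrightarrow> \<not> nwp z x" by (auto simp: MX_def)
    show "z \<in> (if c < a then {(0, a - 1)} else {}) \<union> (if 0 < c then {(1, c - 1)} else {})"
    proof (cases "i = 0")
      case True
      hence ja: "j < a" using zin z by (simp add: sh_def)
      have "\<not> Suc j < a"
      proof
        assume "Suc j < a"
        hence "(0, Suc j) \<in> sh a c" by (simp add: sh_def)
        thus False using mx[of "(0, Suc j)"] z True by (simp add: nwp_def weakly_nw_def)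
      qed
      hence j: "j = a - 1" using ja by simp
      have "\<not> j < c"
      proof
        assume "j < c"
        hence "(1, j) \<in> sh a c" by (simp add: sh_def)
        thus False using mx[of "(1, j)"] z True by (simp add: nwp_def weakly_nw_def)
      qed
      hence "c < a" using ja ca j by simp
      thus ?thesis using z True j by simp
    next
      case False
      hence i1: "i = 1" and jc: "j < c" using zin z by (auto simp: sh_def)
      have "\<not> Suc j < c"
      proof
        assume "Suc j < c"
        hence "(1, Suc j) \<in> sh a c" by (simp add: sh_def)
        thus False using mx[of "(1, Suc j)"] z i1 by (simp add: nwp_def weakly_nw_def)
      qed
      hence "j = c - 1" using jc by simp
      thus ?thesis using z i1 jc by simp
    qed
  next
    assume "z \<in> (if c < a then {(0, a - 1)} else {}) \<union> (if 0 < c then {(1, c - 1)} else {})"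
    thus "z \<in> MX (sh a c)" using ca
      by (auto simp: MX_def sh_def nwp_def weakly_nw_def split: if_splits)
  qed
qed

lemma sh_del0: "0 < a \<Longrightarrow> sh a c - {(0, a - Suc 0)} = sh (a - Suc 0) c"
  by (auto simp: sh_def)

lemma sh_del1: "0 < c \<Longrightarrow> sh a c - {(Suc 0, c - Suc 0)} = sh a (c - Suc 0)"
  by (auto simp: sh_def)

lemma ferrers_sh: "ferrers [b + 1, b] = sh (b + 1) b"
  by (auto simp: ferrers_def sh_def less_Suc_eq)

definition G :: "nat \<Rightarrow> nat \<Rightarrow> nat \<Rightarrow> nat" where
  "G a c m = card (VL (sh a c) m)"

lemma G_Suc: assumes "c \<le> a" shows "G a c (Suc m) =
   (if c < a then G a c m + G (a - 1) c m else 0) + (if 0 < c then G a c m + G a (c - 1) m else 0)"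
proof -
  have "G a c (Suc m) = (\<Sum>z\<in>MX (sh a c). card (VL (sh a c) m) + card (VL (sh a c - {z}) m))"
    unfolding G_def by (rule card_VL_Suc[OF finite_sh])
  moreover have "MX (sh a c) = (if c < a then {(0, a - 1)} else {}) \<union> (if 0 < c then {(1, c - 1)} else {})"
    using assms by (rule MX_sh)
  ultimately show ?thesis using assms
    by (cases "c < a"; cases "0 < c") (simp_all add: sh_del0 sh_del1 G_def)
qed

lemma G_0: "G a c 0 = (if a = 0 \<and> c = 0 then 1 else 0)"
proof -
  have "VL (sh a c) 0 = (if sh a c = {} then {[]} else {})" by (auto simp: VL_def valid_def)
  moreover have "sh a c = {} \<longleftrightarrow> a = 0 \<and> c = 0" using card_sh[of a c] finite_sh[of a c]
    by (metis add_is_0 card.empty card_0_eq)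
  ultimately show ?thesis by (simp add: G_def)
qed

lemma G_van: "m < a + c \<Longrightarrow> G a c m = 0"
proof -
  assume m: "m < a + c"
  have "VL (sh a c) m = {}"
  proof (rule ccontr)
    assume "VL (sh a c) m \<noteq> {}"
    then obtain ws where "length ws = m" "set ws = sh a c" by (auto simp: VL_def valid_def)
    hence "a + c \<le> m" using card_length[of ws] card_sh by simp
    thus False using m by simp
  qed
  thus ?thesis by (simp add: G_def)
qed

lemma SYT_G: "card (SYT_plus k [b + 1, b]) = G (b + 1) b (2 * b + 1 + k)"
proof -
  have "SYT_plus k [b + 1, b] = Fill (sh (b + 1) b) (2 * b + 1 + k)"
    unfolding SYT_plus_def Fill_def ferrers_sh by (simp add: mult_2)
  thus ?thesis by (simp add: card_Fill G_def)
qed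



lemma G_row: "G (Suc d) 0 (Suc m) = m choose d"
proof (induction m arbitrary: d)
  case 0
  have "G (Suc d) 0 (Suc 0) = G (Suc d) 0 0 + G d 0 0" using G_Suc[of 0 "Suc d" 0] by simp
  thus ?case by (simp add: G_0)
next
  case (Suc m)
  have "G (Suc d) 0 (Suc (Suc m)) = G (Suc d) 0 (Suc m) + G d 0 (Suc m)"
    using G_Suc[of 0 "Suc d" "Suc m"] by simp
  also have "\<dots> = Suc m choose d"
  proof (cases d)
    case 0 thus ?thesis using Suc G_Suc[of 0 0 m] by simp
  next
    case (Suc e) thus ?thesis using Suc.IH[of d] Suc.IH[of e] by simp
  qed
  finally show ?case .
qed

definition Qs :: "nat \<Rightarrow> nat \<Rightarrow> nat" where
  "Qs m d = (\<Sum>y\<in>{1..m}. G (y + d) y m)"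

lemma sum_extra: "(\<Sum>y\<in>{1..Suc m}. G (y + d) y m) = Qs m d"
  unfolding Qs_def using G_van[of m "Suc m + d" "Suc m"] by simp

lemma Qs_Suc: "Qs (Suc m) d = (if 0 < d then Qs m d + Qs m (d - 1) else 0) + Qs m d
   + G (Suc d) 0 m + Qs m (Suc d)"
proof -
  have tm: "G (y + d) y (Suc m) = (if 0 < d then G (y + d) y m + G (y + (d - 1)) y m else 0)
      + G (y + d) y m + G (Suc (y - 1) + d) (y - 1) m" if "y \<in> {1..Suc m}" for y
  proof -
    have "G (y + d) y (Suc m) = (if y < y + d then G (y + d) y m + G (y + d - 1) y m else 0)
       + (if 0 < y then G (y + d) y m + G (y + d) (y - 1) m else 0)"
      by (rule G_Suc) simp
    moreover have "y + d - 1 = y + (d - 1)" if "0 < d" using that by simp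
    moreover have "Suc (y - 1) + d = y + d" using \<open>y \<in> {1..Suc m}\<close> by simp
    ultimately show ?thesis using \<open>y \<in> {1..Suc m}\<close> by auto
  qed
  have "Qs (Suc m) d = (\<Sum>y\<in>{1..Suc m}. (if 0 < d then G (y + d) y m + G (y + (d - 1)) y m else 0)
      + G (y + d) y m + G (Suc (y - 1) + d) (y - 1) m)"
    unfolding Qs_def using tm by (rule sum.cong[OF refl])
  also have "\<dots> = (\<Sum>y\<in>{1..Suc m}. (if 0 < d then G (y + d) y m + G (y + (d - 1)) y m else 0))
      + (\<Sum>y\<in>{1..Suc m}. G (y + d) y m) + (\<Sum>y\<in>{1..Suc m}. G (Suc (y - 1) + d) (y - 1) m)"
    by (simp add: sum.distrib)
  also have "(\<Sum>y\<in>{1..Suc m}. (if 0 < d then G (y + d) y m + G (y + (d - 1)) y m else 0))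
      = (if 0 < d then Qs m d + Qs m (d - 1) else 0)"
  proof (cases "0 < d")
    case True
    have "(\<Sum>y\<in>{1..Suc m}. (if 0 < d then G (y + d) y m + G (y + (d - 1)) y m else 0))
      = (\<Sum>y\<in>{1..Suc m}. G (y + d) y m + G (y + (d - 1)) y m)" using True by simp
    also have "\<dots> = Qs m d + Qs m (d - 1)" by (simp only: sum.distrib sum_extra)
    finally show ?thesis using True by simp
  qed simp
  also have "(\<Sum>y\<in>{1..Suc m}. G (Suc (y - 1) + d) (y - 1) m) = (\<Sum>y\<in>{0..m}. G (Suc y + d) y m)"
    using sum.shift_bounds_cl_Suc_ivl[of "\<lambda>y. G (Suc (y - 1) + d) (y - 1) m" 0 m] by simp
  also have "\<dots> = G (Suc d) 0 m + (\<Sum>y\<in>{1..m}. G (Suc y + d) y m)"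
    by (simp add: atLeast0_atMost_Suc_eq_insert_0 sum.atLeast_Suc_atMost sum.atLeast0_atMost_Suc_shift)
  also have "(\<Sum>y\<in>{1..m}. G (Suc y + d) y m) = Qs m (Suc d)"
    unfolding Qs_def by simp
  finally show ?thesis using sum_extra[where m=m and d=d] by simp
qed

definition Bl :: "nat \<Rightarrow> nat \<Rightarrow> int" where
  "Bl L d = int ((2 * L) choose (L + d)) - int ((2 * L) choose (L + d + 1))"

lemma Bl_rec: "Bl (Suc L) d = (if 0 < d then Bl L (d - 1) else 0) + Bl L (Suc d)
   + (if 0 < d then 2 else 1) * Bl L d"
proof (cases d)
  case 0
  show ?thesis
  proof (cases L)
    case 0 thus ?thesis using \<open>d = 0\<close> by (simp add: Bl_def numeral_2_eq_2)
  next
    case (Suc L')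
    have e: "2 * Suc L = Suc (Suc (2 * L))" by simp
    have s: "(2 * L) choose L' = (2 * L) choose (L + 1)"
      using binomial_symmetric[of L' "2 * L"] Suc by simp
    show ?thesis using 0 Suc s unfolding Bl_def
      by (simp add: numeral_eq_Suc)
  qed
next
  case (Suc e)
  show ?thesis using Suc unfolding Bl_def
    by (simp add: numeral_eq_Suc)
qed



lemma Qs_1: "Qs (Suc 0) e = 0"
  unfolding Qs_def using G_van[of "Suc 0" "Suc e" 1] by simp

lemma Qs_closed: "int (Qs (Suc (Suc j)) d) = Bl (Suc j) d - (if d = 0 then 0 else int (j choose (d - 1)))"
proof (induction j arbitrary: d)
  case 0
  have q: "Qs (Suc (Suc 0)) d = (if d = 0 then 1 else 0)"
    using Qs_Suc[of "Suc 0" d] Qs_1 G_row[of d 0] by simp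
  show ?case
  proof (cases d)
    case 0 thus ?thesis using q by (simp add: Bl_def numeral_2_eq_2)
  next
    case (Suc e)
    thus ?thesis using q by (cases e) (simp_all add: Bl_def numeral_2_eq_2)
  qed
next
  case (Suc j)
  have r: "Qs (Suc (Suc (Suc j))) d = (if 0 < d then Qs (Suc (Suc j)) d + Qs (Suc (Suc j)) (d - 1) else 0)
     + Qs (Suc (Suc j)) d + (Suc j choose d) + Qs (Suc (Suc j)) (Suc d)"
    using Qs_Suc[of "Suc (Suc j)" d] G_row[of d "Suc j"] by simp
  have b: "Bl (Suc (Suc j)) d = (if 0 < d then Bl (Suc j) (d - 1) else 0) + Bl (Suc j) (Suc d)
   + (if 0 < d then 2 else 1) * Bl (Suc j) d" by (rule Bl_rec)
  show ?case
  proof (cases d)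
    case 0
    thus ?thesis using r b Suc.IH[of 0] Suc.IH[of 1] by simp
  next
    case (Suc e)
    show ?thesis
    proof (cases e)
      case 0
      thus ?thesis using r b Suc.IH[of 0] Suc.IH[of 1] Suc.IH[of 2] \<open>d = Suc e\<close>
        by (simp add: numeral_2_eq_2)
    next
      case (Suc f)
      thus ?thesis using r b Suc.IH[of d] Suc.IH[of e] Suc.IH[of "Suc d"] \<open>d = Suc e\<close>
        by simp
    qed
  qed
qed



lemma total_count:
  assumes n: "n = i + 3"
  shows "(\<Sum>(b, k) \<in> {(b, k). 2*b + k + 1 = n}. real (card (SYT_plus k [b+1, b])))
     = real ((2*i+4) choose (i+3)) - real ((2*i+4) choose (i+4))"
proof -
  have set_eq: "{(b, k). 2*b + k + 1 = n} = (\<lambda>b. (b, n - 2*b - 1)) ` {b. 2*b + 1 \<le> n}"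
    by (auto simp: image_def)
  have inj: "inj_on (\<lambda>b. (b, n - 2*b - 1)) {b. 2*b + 1 \<le> n}" by (auto simp: inj_on_def)
  have "(\<Sum>(b, k) \<in> {(b, k). 2*b + k + 1 = n}. real (card (SYT_plus k [b+1, b])))
      = (\<Sum>b \<in> {b. 2*b + 1 \<le> n}. real (card (SYT_plus (n - 2*b - 1) [b+1, b])))"
    unfolding set_eq by (subst sum.reindex[OF inj]) simp
  also have "\<dots> = (\<Sum>b \<in> {b. 2*b + 1 \<le> n}. real (G (b + 1) b n))"
  proof (rule sum.cong[OF refl])
    fix b assume "b \<in> {b. 2*b + 1 \<le> n}"
    hence "2 * b + 1 + (n - 2*b - 1) = n" by simp
    thus "real (card (SYT_plus (n - 2*b - 1) [b+1, b])) = real (G (b + 1) b n)"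
      using SYT_G[of "n - 2*b - 1" b] by simp
  qed
  also have "\<dots> = (\<Sum>b \<in> {0..n}. real (G (b + 1) b n))"
  proof (rule sum.mono_neutral_left)
    show "finite {0..n}" by simp
    show "{b. 2*b + 1 \<le> n} \<subseteq> {0..n}" by auto
    show "\<forall>b\<in>{0..n} - {b. 2*b + 1 \<le> n}. real (G (b + 1) b n) = 0"
      using G_van by auto
  qed
  also have "\<dots> = real (G 1 0 n) + (\<Sum>b \<in> {1..n}. real (G (b + 1) b n))"
    by (simp add: sum.atLeast_Suc_atMost)
  also have "(\<Sum>b \<in> {1..n}. real (G (b + 1) b n)) = real (Qs n 1)"
    unfolding Qs_def by simp
  finally have tot: "(\<Sum>(b, k) \<in> {(b, k). 2*b + k + 1 = n}. real (card (SYT_plus k [b+1, b])))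
      = real (G 1 0 n) + real (Qs n 1)" .
  have g: "G 1 0 n = 1" using G_row[of 0 "i + 2"] n by (simp add: numeral_eq_Suc)
  have q: "int (Qs n 1) = Bl (Suc (Suc i)) 1 - 1"
    using Qs_closed[of "Suc i" 1] n by (simp add: numeral_eq_Suc)
  have "real (Qs n 1) = real_of_int (Bl (Suc (Suc i)) 1) - 1"
    using arg_cong[OF q, of real_of_int] by simp
  also have "real_of_int (Bl (Suc (Suc i)) 1) = real ((2*i+4) choose (i+3)) - real ((2*i+4) choose (i+4))"
  proof -
    have "2 * Suc (Suc i) = 2*i+4" "Suc (Suc i) + 1 = i + 3" "Suc (Suc i) + 1 + 1 = i + 4" by simp_all
    thus ?thesis unfolding Bl_def by (simp only:)
  qed
  finally show ?thesis using tot g by simp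
qed



lemma alg1: fixes a F P :: real assumes a: "a \<ge> 0" and P: "P \<noteq> 0" shows
 "F / ((a+3)*(a+2)*(a+1)*P*((a+1)*P)) - F/((a+4)*(a+3)*(a+2)*(a+1)*P*P)
  = (2*a+6)*(2*a+5)*F/((a+3)*(a+2)*(a+1)*P*((a+3)*(a+2)*(a+1)*P))/(a+4) - F/((a+2)*(a+1)*P*((a+2)*(a+1)*P))/(a+3)"
proof -
  have nz: "a+1 \<noteq> 0" "a+2 \<noteq> 0" "a+3 \<noteq> 0" "a+4 \<noteq> 0" using a by linarith+
  show ?thesis using nz P by (simp add: divide_simps) (simp add: algebra_simps)
qed
lemma alg2: fixes a F P :: real assumes a: "a \<ge> 0" and P: "P \<noteq> 0" shows
 "(2*a+6)*(2*a+5)*F/((a+3)*(a+2)*(a+1)*P*((a+3)*(a+2)*(a+1)*P))/(a+4) - F/((a+2)*(a+1)*P*((a+2)*(a+1)*P))/(a+3)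
  = 3 / (a + 3 + 1) * (F / ((a+3)*(a+2)*(a+1)*P*((a+1)*P)))"
proof -
  have nz: "a+1 \<noteq> 0" "a+2 \<noteq> 0" "a+3 \<noteq> 0" "a+4 \<noteq> 0" "a + 3 + 1 \<noteq> 0" using a by linarith+
  show ?thesis using nz P by (simp add: divide_simps) (simp add: algebra_simps)
qed


lemma arith_part:
  fixes i :: nat
  shows "real ((2*i+4) choose (i+3)) - real ((2*i+4) choose (i+4)) = catalan (i+3) - catalan (i+2)"
    and "catalan (i+3) - catalan (i+2) = 3 / (real (i+3) + 1) * real ((2*i+4) choose (i+3))"
proof -
  define F where "F = (fact (2*i+4) :: real)"
  define P where "P = (fact i :: real)"
  have P0: "P > 0" unfolding P_def by simp
  have f3: "(fact (i+3) :: real) = (i+3)*(i+2)*(i+1)*P"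
    unfolding P_def by (simp add: numeral_eq_Suc fact_Suc algebra_simps)
  have f4: "(fact (i+4) :: real) = (i+4)*(i+3)*(i+2)*(i+1)*P"
    unfolding P_def by (simp add: numeral_eq_Suc fact_Suc algebra_simps)
  have f2: "(fact (i+2) :: real) = (i+2)*(i+1)*P"
    unfolding P_def by (simp add: numeral_eq_Suc fact_Suc algebra_simps)
  have f1: "(fact (i+1) :: real) = (i+1)*P"
    unfolding P_def by (simp add: fact_Suc)
  have f6: "(fact (2*i+6) :: real) = (2*i+6)*(2*i+5)*F"
    unfolding F_def by (simp add: numeral_eq_Suc fact_Suc algebra_simps)
  have x: "real ((2*i+4) choose (i+3)) = F / ((i+3)*(i+2)*(i+1)*P * ((i+1)*P))"
  proof -
    have "real ((2*i+4) choose (i+3)) = fact (2*i+4) / (fact (i+3) * fact (2*i+4 - (i+3)))"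
      by (rule binomial_fact) simp
    moreover have "2*i+4 - (i+3) = i + 1" by simp
    ultimately show ?thesis using f3 f1 F_def by simp
  qed
  have z: "real ((2*i+4) choose (i+4)) = F / ((i+4)*(i+3)*(i+2)*(i+1)*P * P)"
  proof -
    have "real ((2*i+4) choose (i+4)) = fact (2*i+4) / (fact (i+4) * fact (2*i+4 - (i+4)))"
      by (rule binomial_fact) simp
    moreover have "2*i+4 - (i+4) = i" by simp
    ultimately show ?thesis using f4 F_def P_def by simp
  qed
  have c3: "catalan (i+3) = (2*i+6)*(2*i+5)*F / ((i+3)*(i+2)*(i+1)*P * ((i+3)*(i+2)*(i+1)*P)) / (i+4)"
  proof -
    have "real ((2*(i+3)) choose (i+3)) = fact (2*(i+3)) / (fact (i+3) * fact (2*(i+3) - (i+3)))"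
      by (rule binomial_fact) simp
    moreover have "2*(i+3) - (i+3) = i + 3" "2*(i+3) = 2*i+6" by simp_all
    ultimately have e: "real ((2*(i+3)) choose (i+3)) = (2*i+6)*(2*i+5)*F / ((i+3)*(i+2)*(i+1)*P * ((i+3)*(i+2)*(i+1)*P))"
      by (simp only: f3 f6)
    show ?thesis unfolding catalan_def e by simp
  qed
  have c2: "catalan (i+2) = F / ((i+2)*(i+1)*P * ((i+2)*(i+1)*P)) / (i+3)"
  proof -
    have "real ((2*(i+2)) choose (i+2)) = fact (2*(i+2)) / (fact (i+2) * fact (2*(i+2) - (i+2)))"
      by (rule binomial_fact) simp
    moreover have "2*(i+2) - (i+2) = i + 2" "2*(i+2) = 2*i+4" by simp_all
    ultimately have e: "real ((2*(i+2)) choose (i+2)) = F / ((i+2)*(i+1)*P * ((i+2)*(i+1)*P))"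
      by (simp only: f2 F_def)
    show ?thesis unfolding catalan_def e by simp
  qed
  have pos: "real i + 1 \<noteq> 0" "real i + 2 \<noteq> 0" "real i + 3 \<noteq> 0" "real i + 4 \<noteq> 0" "P \<noteq> 0"
    using P0 by (simp_all add: add_pos_nonneg)
  show "real ((2*i+4) choose (i+3)) - real ((2*i+4) choose (i+4)) = catalan (i+3) - catalan (i+2)"
    unfolding x z c3 c2 of_nat_add of_nat_mult of_nat_numeral of_nat_1 using P0 by (intro alg1) auto
  show "catalan (i+3) - catalan (i+2) = 3 / (real (i+3) + 1) * real ((2*i+4) choose (i+3))"
    unfolding x c3 c2 of_nat_add of_nat_mult of_nat_numeral of_nat_1 using P0 by (intro alg2) auto
qed


theorem corollary9:
  fixes n :: nat
  assumes "n \<ge> 3"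
  shows "(\<Sum>(b, k) \<in> {(b, k). 2*b + k + 1 = n}. real (card (SYT_plus k [b+1, b])))
           = catalan n - catalan (n - 1)
       \<and> catalan n - catalan (n - 1) = 3 / (n + 1) * real ((2*n - 2) choose n)"
proof -
  obtain i where n: "n = i + 3" using assms by (metis add.commute le_iff_add)
  have e1: "n - 1 = i + 2" "2 * n - 2 = 2 * i + 4" using n by simp_all
  have "(\<Sum>(b, k) \<in> {(b, k). 2*b + k + 1 = n}. real (card (SYT_plus k [b+1, b])))
     = real ((2*i+4) choose (i+3)) - real ((2*i+4) choose (i+4))" by (rule total_count[OF n])
  also have "\<dots> = catalan n - catalan (n - 1)" using arith_part(1)[of i] n e1 by simp
  finally have A: "(\<Sum>(b, k) \<in> {(b, k). 2*b + k + 1 = n}. real (card (SYT_plus k [b+1, b])))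
           = catalan n - catalan (n - 1)" .
  have B: "catalan n - catalan (n - 1) = 3 / (n + 1) * real ((2*n - 2) choose n)"
    using arith_part(2)[of i] n e1 by (simp add: add.commute)
  show ?thesis using A B by blast
qed

end
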